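(* Let $L$ be a lattice diagram with $n$ cells $(p_1,q_1)<\dots<(p_n,q_n)$, listed in the order described below, and let $k\ge1$ be an integer. Then $$e_k(\partial X)\,\Delta_L(X,Y)=\sum_{1\le i_1<\dots<i_k\le n}\epsilon\big(L,e_k(i_1,\dots,i_k;L)\big)\,\Delta_{e_k(i_1,\dots,i_k;L)}(X,Y).$$ Here $e_k(i_1,\dots,i_k;L)$ is the diagram obtained from $L$ by replacing the biexponents $(p_{i_1},q_{i_1}),\dots,(p_{i_k},q_{i_k})$ by $(p_{i_1}-1,q_{i_1}),\dots,(p_{i_k}-1,q_{i_k})$ and keeping the others unchanged. For each term with $\Delta_{e_k(i_1,\dots,i_k;L)}\neq0$, the coefficient $\epsilon(L,e_k(i_1,\dots,i_k;L))$ is a positive integer, namely $\epsilon(L,L')=\prod_{t=1}^n p_t!\,q_t!\big/\prod_{t=1}^n p'_t!\,q'_t!$, where $(p'_t,q'_t)$ are the biexponents of $L'$.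
   Context: A lattice diagram is a finite subset of $\mathbb{N}\times\mathbb{N}$. Its cells $(p,q)$ are listed in the order where $(p,q)<(p',q')$ iff $q<q'$, or $q=q'$ and $p<p'$. For such a list $(p_1,q_1),\dots,(p_n,q_n)$, $\Delta_L(X,Y)=\det(x_r^{p_t}y_r^{q_t})_{1\le r,t\le n}$ with $X=(x_1,\dots,x_n)$ and $Y=(y_1,\dots,y_n)$. This determinant is zero when two biexponents coincide. A term involving a negative exponent is understood to be zero, since its coefficient vanishes. The function $e_k$ is the $k$-th elementary symmetric function, and $e_k(\partial X)$ is obtained from it by substituting $\partial/\partial x_r$ for $x_r$. *)

theory Defs
  imports "HOL-Analysis.Derivative" "Jordan_Normal_Form.Determinant"
begin

definition cell_less :: "nat \<times> nat \<Rightarrow> nat \<times> nat \<Rightarrow> bool" where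
  "cell_less c c' \<longleftrightarrow> snd c < snd c' \<or> (snd c = snd c' \<and> fst c < fst c')"

definition Delta :: "(int \<times> int) list \<Rightarrow> (nat \<Rightarrow> real) \<Rightarrow> (nat \<Rightarrow> real) \<Rightarrow> real" where
  "Delta bs X Y =
     (if (\<forall>b\<in>set bs. fst b \<ge> 0 \<and> snd b \<ge> 0)
      then det (mat (length bs) (length bs)
             (\<lambda>(r, t). X r ^ nat (fst (bs ! t)) * Y r ^ nat (snd (bs ! t))))
      else 0)"

definition int_cells :: "(nat \<times> nat) list \<Rightarrow> (int \<times> int) list" where
  "int_cells cs = map (\<lambda>(p, q). (int p, int q)) cs"

definition Delta_L :: "(nat \<times> nat) list \<Rightarrow> (nat \<Rightarrow> real) \<Rightarrow> (nat \<Rightarrow> real) \<Rightarrow> real" where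
  "Delta_L cs = Delta (int_cells cs)"

text \<open>e_k(i_1,...,i_k;L): positions in S (0-based) get p lowered by 1.\<close>
definition ek_diag :: "nat set \<Rightarrow> (nat \<times> nat) list \<Rightarrow> (int \<times> int) list" where
  "ek_diag S cs = map (\<lambda>t. (int (fst (cs ! t)) - (if t \<in> S then 1 else 0), int (snd (cs ! t))))
                    [0..<length cs]"

definition epsilon :: "(nat \<times> nat) list \<Rightarrow> (int \<times> int) list \<Rightarrow> real" where
  "epsilon cs bs =
     (\<Prod>t<length cs. fact (fst (cs ! t)) * fact (snd (cs ! t)))
     / (\<Prod>t<length bs. fact (nat (fst (bs ! t))) * fact (nat (snd (bs ! t))))"

definition dx :: "nat \<Rightarrow> ((nat \<Rightarrow> real) \<Rightarrow> (nat \<Rightarrow> real) \<Rightarrow> real)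
                      \<Rightarrow> ((nat \<Rightarrow> real) \<Rightarrow> (nat \<Rightarrow> real) \<Rightarrow> real)" where
  "dx r f = (\<lambda>X Y. deriv (\<lambda>s. f (X(r := s)) Y) (X r))"

definition ek_dX :: "nat \<Rightarrow> nat \<Rightarrow> ((nat \<Rightarrow> real) \<Rightarrow> (nat \<Rightarrow> real) \<Rightarrow> real)
                      \<Rightarrow> ((nat \<Rightarrow> real) \<Rightarrow> (nat \<Rightarrow> real) \<Rightarrow> real)" where
  "ek_dX n k f = (\<lambda>X Y. \<Sum>S\<in>{S. S \<subseteq> {..<n} \<and> card S = k}.
                    foldr dx (sorted_list_of_set S) f X Y)"

end

theory Submission
  imports Defs
begin


definition msum :: "nat \<Rightarrow> (nat \<Rightarrow> nat) set \<Rightarrow> ((nat\<Rightarrow>nat) \<Rightarrow> real) \<Rightarrow> ((nat\<Rightarrow>nat) \<Rightarrow> nat \<Rightarrow> nat)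
   \<Rightarrow> ((nat\<Rightarrow>nat) \<Rightarrow> nat \<Rightarrow> nat) \<Rightarrow> ((nat\<Rightarrow>real)\<Rightarrow>(nat\<Rightarrow>real)\<Rightarrow>real)" where
"msum n P w a b = (\<lambda>X Y. \<Sum>\<sigma>\<in>P. w \<sigma> * (\<Prod>r<n. X r ^ a \<sigma> r * Y r ^ b \<sigma> r))"

lemma dx_msum:
  assumes "r0 < n" "finite P"
  shows "dx r0 (msum n P w a b) = msum n P (\<lambda>\<sigma>. w \<sigma> * real (a \<sigma> r0))
            (\<lambda>\<sigma> r. if r = r0 then a \<sigma> r - 1 else a \<sigma> r) b"
proof (intro ext)
  fix X Y :: "nat \<Rightarrow> real"
  let ?C = "\<lambda>\<sigma>. \<Prod>r\<in>{..<n}-{r0}. X r ^ a \<sigma> r * Y r ^ b \<sigma> r"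
  have eq: "(\<lambda>s::real. msum n P w a b (X(r0:=s)) Y) = (\<lambda>s. \<Sum>\<sigma>\<in>P. w \<sigma> * ((s ^ a \<sigma> r0 * Y r0 ^ b \<sigma> r0) * ?C \<sigma>))"
  proof
    fix s
    have "(\<Prod>r<n. (X(r0:=s)) r ^ a \<sigma> r * Y r ^ b \<sigma> r) = (s ^ a \<sigma> r0 * Y r0 ^ b \<sigma> r0) * ?C \<sigma>" for \<sigma>
    proof -
      have "(\<Prod>r\<in>{..<n}-{r0}. (X(r0:=s)) r ^ a \<sigma> r * Y r ^ b \<sigma> r) = ?C \<sigma>"
        by (rule prod.cong) auto
      then show ?thesis using assms(1) by (simp add: prod.remove[of "{..<n}" r0])
    qed
    then show "msum n P w a b (X(r0:=s)) Y = (\<Sum>\<sigma>\<in>P. w \<sigma> * ((s ^ a \<sigma> r0 * Y r0 ^ b \<sigma> r0) * ?C \<sigma>))"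
      by (simp add: msum_def)
  qed
  have d: "((\<lambda>s. \<Sum>\<sigma>\<in>P. w \<sigma> * ((s ^ a \<sigma> r0 * Y r0 ^ b \<sigma> r0) * ?C \<sigma>)) has_field_derivative
     (\<Sum>\<sigma>\<in>P. w \<sigma> * ((real (a \<sigma> r0) * X r0 ^ (a \<sigma> r0 - 1) * Y r0 ^ b \<sigma> r0) * ?C \<sigma>))) (at (X r0))"
    by (auto intro!: derivative_eq_intros sum.cong simp: mult_ac)
  have rhs: "msum n P (\<lambda>\<sigma>. w \<sigma> * real (a \<sigma> r0)) (\<lambda>\<sigma> r. if r = r0 then a \<sigma> r - 1 else a \<sigma> r) b X Y
     = (\<Sum>\<sigma>\<in>P. w \<sigma> * ((real (a \<sigma> r0) * X r0 ^ (a \<sigma> r0 - 1) * Y r0 ^ b \<sigma> r0) * ?C \<sigma>))"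
    unfolding msum_def
  proof (rule sum.cong[OF refl])
    fix \<sigma>
    have rest: "(\<Prod>r\<in>{..<n}-{r0}. X r ^ (if r = r0 then a \<sigma> r - 1 else a \<sigma> r) * Y r ^ b \<sigma> r) = ?C \<sigma>"
      by (rule prod.cong) auto
    show "w \<sigma> * real (a \<sigma> r0) * (\<Prod>r<n. X r ^ (if r = r0 then a \<sigma> r - 1 else a \<sigma> r) * Y r ^ b \<sigma> r)
       = w \<sigma> * ((real (a \<sigma> r0) * X r0 ^ (a \<sigma> r0 - 1) * Y r0 ^ b \<sigma> r0) * ?C \<sigma>)"
      using assms(1) by (subst prod.remove[of "{..<n}" r0]) (auto simp only: rest, simp_all)
  qed
  show "dx r0 (msum n P w a b) X Y = msum n P (\<lambda>\<sigma>. w \<sigma> * real (a \<sigma> r0))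
            (\<lambda>\<sigma> r. if r = r0 then a \<sigma> r - 1 else a \<sigma> r) b X Y"
    unfolding dx_def eq rhs using DERIV_imp_deriv[OF d] by simp
qed

lemma foldr_dx:
  assumes "distinct L" "\<forall>x\<in>set L. x < n" "finite P"
  shows "foldr dx L (msum n P w a b) = msum n P (\<lambda>\<sigma>. w \<sigma> * (\<Prod>r\<in>set L. real (a \<sigma> r)))
           (\<lambda>\<sigma> r. if r \<in> set L then a \<sigma> r - 1 else a \<sigma> r) b"
  using assms
proof (induction L)
  case Nil
  then show ?case by simp
next
  case (Cons x L)
  then have "foldr dx (x#L) (msum n P w a b) = dx x (msum n P (\<lambda>\<sigma>. w \<sigma> * (\<Prod>r\<in>set L. real (a \<sigma> r)))
           (\<lambda>\<sigma> r. if r \<in> set L then a \<sigma> r - 1 else a \<sigma> r) b)" by simp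
  also have "\<dots> = msum n P (\<lambda>\<sigma>. w \<sigma> * (\<Prod>r\<in>set L. real (a \<sigma> r)) * real (a \<sigma> x))
           (\<lambda>\<sigma> r. if r = x then a \<sigma> r - 1 else if r \<in> set L then a \<sigma> r - 1 else a \<sigma> r) b"
  proof -
    have e: "(\<lambda>\<sigma> r. if r = x then (if r \<in> set L then a \<sigma> r - 1 else a \<sigma> r) - 1 else if r \<in> set L then a \<sigma> r - 1 else a \<sigma> r)
      = (\<lambda>\<sigma> r. if r = x then a \<sigma> r - 1 else if r \<in> set L then a \<sigma> r - 1 else a \<sigma> r)"
      using Cons.prems by (auto intro!: ext)
    have w: "(\<lambda>\<sigma>. w \<sigma> * (\<Prod>r\<in>set L. real (a \<sigma> r)) * real (if x \<in> set L then a \<sigma> x - 1 else a \<sigma> x))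
       = (\<lambda>\<sigma>. w \<sigma> * (\<Prod>r\<in>set L. real (a \<sigma> r)) * real (a \<sigma> x))"
      using Cons.prems by auto
    show ?thesis using Cons.prems by (subst dx_msum) (simp_all only: e w, simp_all)
  qed
  also have "\<dots> = msum n P (\<lambda>\<sigma>. w \<sigma> * (\<Prod>r\<in>set (x#L). real (a \<sigma> r)))
           (\<lambda>\<sigma> r. if r \<in> set (x#L) then a \<sigma> r - 1 else a \<sigma> r) b"
  proof -
    have e: "(\<lambda>\<sigma> r. if r = x then a \<sigma> r - 1 else if r \<in> set L then a \<sigma> r - 1 else a \<sigma> r)
       = (\<lambda>\<sigma> r. if r \<in> set (x#L) then a \<sigma> r - 1 else a \<sigma> r)" by (auto intro!: ext)
    have w: "(\<lambda>\<sigma>. w \<sigma> * (\<Prod>r\<in>set L. real (a \<sigma> r)) * real (a \<sigma> x))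
       = (\<lambda>\<sigma>. w \<sigma> * (\<Prod>r\<in>set (x#L). real (a \<sigma> r)))"
      using Cons.prems by (auto intro!: ext simp: mult_ac)
    show ?thesis by (simp only: e w)
  qed
  finally show ?case .
qed

lemma det_mat_expand:
  "det (mat n n f) = (\<Sum>\<sigma>\<in>{\<sigma>. \<sigma> permutes {..<n}}. signof \<sigma> * (\<Prod>i<n. f (i, \<sigma> i)))"
proof -
  have "det (mat n n f) = (\<Sum>\<sigma>\<in>{\<sigma>. \<sigma> permutes {0..<n}}. signof \<sigma> * (\<Prod>i=0..<n. mat n n f $$ (i, \<sigma> i)))"
    by (rule det_def') auto
  also have "\<dots> = (\<Sum>\<sigma>\<in>{\<sigma>. \<sigma> permutes {..<n}}. signof \<sigma> * (\<Prod>i<n. f (i, \<sigma> i)))"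
    unfolding atLeast0LessThan
    apply (intro sum.cong refl arg_cong2[where f="(*)"] prod.cong)
    subgoal for \<sigma> i using permutes_in_image[of \<sigma> "{..<n}" i] by (subst index_mat) auto
    done
  finally show ?thesis .
qed


lemma perm_image_bij:
  assumes "\<sigma> permutes {..<n}"
  shows "bij_betw ((`) \<sigma>) {S. S \<subseteq> {..<n} \<and> card S = k} {S. S \<subseteq> {..<n} \<and> card S = k}"
proof -
  have inj: "inj \<sigma>" using assms permutes_inj by blast
  show ?thesis
  proof (rule bij_betwI')
    fix S T assume "S \<in> {S. S \<subseteq> {..<n} \<and> card S = k}" "T \<in> {S. S \<subseteq> {..<n} \<and> card S = k}"
    show "(\<sigma> ` S = \<sigma> ` T) = (S = T)" using inj by (simp add: inj_image_eq_iff)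
  next
    fix S assume S: "S \<in> {S. S \<subseteq> {..<n} \<and> card S = k}"
    then show "\<sigma> ` S \<in> {S. S \<subseteq> {..<n} \<and> card S = k}"
      using inj permutes_in_image[OF assms] by (auto simp: card_image inj_on_subset)
  next
    fix T assume T: "T \<in> {S. S \<subseteq> {..<n} \<and> card S = k}"
    let ?S = "inv_into UNIV \<sigma> ` T"
    have "\<sigma> ` ?S = T" using permutes_inverses(1)[OF assms] by (auto simp: image_iff)
    moreover have "?S \<subseteq> {..<n}" using T permutes_in_image[OF permutes_inv[OF assms]] by auto
    moreover have "card ?S = k" using T permutes_inj[OF permutes_inv[OF assms]]
      by (auto simp: card_image inj_on_subset)
    ultimately show "\<exists>S\<in>{S. S \<subseteq> {..<n} \<and> card S = k}. T = \<sigma> ` S" by auto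
  qed
qed

lemma Delta_L_msum:
  "Delta_L cs = msum (length cs) {\<sigma>. \<sigma> permutes {..<length cs}} signof
      (\<lambda>\<sigma> r. fst (cs ! \<sigma> r)) (\<lambda>\<sigma> r. snd (cs ! \<sigma> r))"
proof (intro ext)
  fix X Y :: "nat \<Rightarrow> real"
  let ?n = "length cs"
  have "Delta_L cs X Y = (\<Sum>\<sigma>\<in>{\<sigma>. \<sigma> permutes {..<?n}}. signof \<sigma> * (\<Prod>i<?n.
     X i ^ nat (fst (int_cells cs ! \<sigma> i)) * Y i ^ nat (snd (int_cells cs ! \<sigma> i))))"
    unfolding Delta_L_def Delta_def
    by (simp add: det_mat_expand int_cells_def case_prod_beta)
  also have "\<dots> = msum ?n {\<sigma>. \<sigma> permutes {..<?n}} signof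
      (\<lambda>\<sigma> r. fst (cs ! \<sigma> r)) (\<lambda>\<sigma> r. snd (cs ! \<sigma> r)) X Y"
    unfolding msum_def
    apply (intro sum.cong refl arg_cong2[where f="(*)"] prod.cong)
    subgoal for \<sigma> i using permutes_in_image[of \<sigma> "{..<?n}" i]
      by (auto simp: int_cells_def split: prod.splits)
    subgoal for \<sigma> i using permutes_in_image[of \<sigma> "{..<?n}" i]
      by (auto simp: int_cells_def split: prod.splits)
    done
  finally show "Delta_L cs X Y = msum ?n {\<sigma>. \<sigma> permutes {..<?n}} signof
      (\<lambda>\<sigma> r. fst (cs ! \<sigma> r)) (\<lambda>\<sigma> r. snd (cs ! \<sigma> r)) X Y" .
qed


lemma nat_int_m1[simp]: "nat (int m - 1) = m - Suc 0" by (cases m) auto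

lemma ek_len[simp]: "length (ek_diag T cs) = length cs" by (simp add: ek_diag_def)

lemma ek_nth: "t < length cs \<Longrightarrow> ek_diag T cs ! t = (int (fst (cs!t)) - (if t\<in>T then 1 else 0), int (snd (cs!t)))"
  by (simp add: ek_diag_def)

lemma ek_nonneg_iff:
  assumes "T \<subseteq> {..<length cs}"
  shows "(\<forall>b\<in>set (ek_diag T cs). fst b \<ge> 0 \<and> snd b \<ge> 0) \<longleftrightarrow> (\<forall>t\<in>T. 1 \<le> fst (cs!t))"
  using assms by (force simp: ek_diag_def)

lemma Delta_ek_pos:
  assumes "T \<subseteq> {..<length cs}" "\<forall>t\<in>T. 1 \<le> fst (cs!t)"
  shows "Delta (ek_diag T cs) X Y = (\<Sum>\<sigma>\<in>{\<sigma>. \<sigma> permutes {..<length cs}}. signof \<sigma> *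
     (\<Prod>i<length cs. X i ^ (if \<sigma> i \<in> T then fst (cs!\<sigma> i) - 1 else fst (cs!\<sigma> i)) * Y i ^ snd (cs ! \<sigma> i)))"
  unfolding Delta_def using ek_nonneg_iff[OF assms(1)] assms(2)
  apply (simp add: det_mat_expand case_prod_beta)
  apply (intro sum.cong refl arg_cong2[where f="(*)"] prod.cong)
  subgoal for \<sigma> i using permutes_in_image[of \<sigma> "{..<length cs}" i] assms(2)
    by (auto simp: ek_nth)
  subgoal for \<sigma> i using permutes_in_image[of \<sigma> "{..<length cs}" i] assms(2)
    by (auto simp: ek_nth)
  done

lemma Delta_ek_zero:
  assumes "T \<subseteq> {..<length cs}" "\<not> (\<forall>t\<in>T. 1 \<le> fst (cs!t))"
  shows "Delta (ek_diag T cs) X Y = 0"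
  unfolding Delta_def using ek_nonneg_iff[OF assms(1)] assms(2) by auto

lemma eps_ek:
  assumes "T \<subseteq> {..<length cs}" "\<forall>t\<in>T. 1 \<le> fst (cs!t)"
  shows "epsilon cs (ek_diag T cs) = (\<Prod>t\<in>T. real (fst (cs!t)))"
proof -
  let ?n = "length cs"
  let ?D = "\<Prod>t<?n. (fact (if t \<in> T then fst (cs!t) - 1 else fst (cs!t)) * fact (snd (cs!t)) :: real)"
  have den: "(\<Prod>t<length (ek_diag T cs). fact (nat (fst (ek_diag T cs ! t))) * fact (nat (snd (ek_diag T cs ! t)))) = ?D"
    by (rule prod.cong) (auto simp: ek_nth)
  have num: "(\<Prod>t<?n. fact (fst (cs ! t)) * fact (snd (cs ! t)) :: real)
      = (\<Prod>t<?n. (if t \<in> T then real (fst (cs!t)) else 1) *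
            (fact (if t \<in> T then fst (cs!t) - 1 else fst (cs!t)) * fact (snd (cs!t))))"
  proof (rule prod.cong[OF refl])
    fix t assume "t \<in> {..<?n}"
    show "fact (fst (cs ! t)) * fact (snd (cs ! t)) = (if t \<in> T then real (fst (cs!t)) else 1) *
            (fact (if t \<in> T then fst (cs!t) - 1 else fst (cs!t)) * fact (snd (cs!t)))"
      using assms(2) by (cases "t \<in> T") (auto simp: fact_reduce[of "fst (cs!t)"])
  qed
  also have "\<dots> = (\<Prod>t<?n. (if t \<in> T then real (fst (cs!t)) else 1)) * ?D"
    by (rule prod.distrib)
  also have "(\<Prod>t<?n. (if t \<in> T then real (fst (cs!t)) else 1)) = (\<Prod>t\<in>T. real (fst (cs!t)))"
    using prod.inter_restrict[of "{..<?n}" "\<lambda>t. real (fst (cs!t))" T] assms(1)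
    by (simp add: Int_absorb1)
  finally have "(\<Prod>t<?n. fact (fst (cs ! t)) * fact (snd (cs ! t)) :: real) = (\<Prod>t\<in>T. real (fst (cs!t))) * ?D" .
  moreover have "?D \<noteq> 0" by (simp add: prod_zero_iff)
  ultimately show ?thesis unfolding epsilon_def den by simp
qed


theorem mainTheorem2:
  fixes cs :: "(nat \<times> nat) list" and k :: nat
  assumes "sorted_wrt cell_less cs"
    and "k \<ge> 1"
  shows "(\<forall>X Y. ek_dX (length cs) k (Delta_L cs) X Y =
            (\<Sum>S\<in>{S. S \<subseteq> {..<length cs} \<and> card S = k}.
               epsilon cs (ek_diag S cs) * Delta (ek_diag S cs) X Y))
       \<and> (\<forall>S. S \<subseteq> {..<length cs} \<and> card S = k \<and> Delta (ek_diag S cs) \<noteq> (\<lambda>X Y. 0)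
              \<longrightarrow> (\<exists>m::nat. m > 0 \<and> epsilon cs (ek_diag S cs) = real m))"
proof (intro conjI allI impI)
  let ?n = "length cs"
  let ?K = "{S. S \<subseteq> {..<?n} \<and> card S = k}"
  let ?P = "{\<sigma>. \<sigma> permutes {..<?n}}"
  have finP: "finite ?P" by (rule finite_permutations) simp
  have finK: "finite ?K" by (rule finite_subset[of _ "Pow {..<?n}"]) auto
  fix X Y :: "nat \<Rightarrow> real"
  define G where "G \<sigma> T = signof \<sigma> * (\<Prod>t\<in>T. real (fst (cs!t))) *
     (\<Prod>r<?n. X r ^ (if \<sigma> r \<in> T then fst (cs!\<sigma> r) - 1 else fst (cs!\<sigma> r)) * Y r ^ snd (cs!\<sigma> r))" for \<sigma> T
  have "ek_dX ?n k (Delta_L cs) X Y = (\<Sum>S\<in>?K. \<Sum>\<sigma>\<in>?P. G \<sigma> (\<sigma> ` S))"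
    unfolding ek_dX_def Delta_L_msum
  proof (rule sum.cong[OF refl])
    fix S assume S: "S \<in> ?K"
    then have finS: "finite S" using finite_subset by blast
    have fe: "foldr dx (sorted_list_of_set S) (msum ?n ?P signof (\<lambda>\<sigma> r. fst (cs ! \<sigma> r)) (\<lambda>\<sigma> r. snd (cs ! \<sigma> r)))
      = msum ?n ?P (\<lambda>\<sigma>. signof \<sigma> * (\<Prod>r\<in>S. real (fst (cs ! \<sigma> r))))
           (\<lambda>\<sigma> r. if r \<in> S then fst (cs ! \<sigma> r) - 1 else fst (cs ! \<sigma> r)) (\<lambda>\<sigma> r. snd (cs ! \<sigma> r))"
      using foldr_dx[of "sorted_list_of_set S" ?n ?P signof "\<lambda>\<sigma> r. fst (cs ! \<sigma> r)" "\<lambda>\<sigma> r. snd (cs ! \<sigma> r)"]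
        finS S finP by auto
    have m: "msum ?n ?P (\<lambda>\<sigma>. signof \<sigma> * (\<Prod>r\<in>S. real (fst (cs ! \<sigma> r))))
           (\<lambda>\<sigma> r. if r \<in> S then fst (cs ! \<sigma> r) - 1 else fst (cs ! \<sigma> r)) (\<lambda>\<sigma> r. snd (cs ! \<sigma> r)) X Y = (\<Sum>\<sigma>\<in>?P. G \<sigma> (\<sigma> ` S))"
      unfolding msum_def G_def
    proof (rule sum.cong[OF refl])
      fix \<sigma> assume "\<sigma> \<in> ?P"
      then have inj: "inj \<sigma>" using permutes_inj by blast
      have "(\<Prod>t\<in>\<sigma> ` S. real (fst (cs!t))) = (\<Prod>r\<in>S. real (fst (cs ! \<sigma> r)))"
        using inj by (simp add: prod.reindex inj_on_subset)
      moreover have "\<And>r. (\<sigma> r \<in> \<sigma> ` S) = (r \<in> S)" using inj by (simp add: inj_image_mem_iff)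
      ultimately show "signof \<sigma> * (\<Prod>r\<in>S. real (fst (cs ! \<sigma> r))) *
         (\<Prod>r<?n. X r ^ (if r \<in> S then fst (cs ! \<sigma> r) - 1 else fst (cs ! \<sigma> r)) * Y r ^ snd (cs ! \<sigma> r))
        = signof \<sigma> * (\<Prod>t\<in>\<sigma> ` S. real (fst (cs!t))) *
         (\<Prod>r<?n. X r ^ (if \<sigma> r \<in> \<sigma> ` S then fst (cs!\<sigma> r) - 1 else fst (cs!\<sigma> r)) * Y r ^ snd (cs!\<sigma> r))"
        by simp
    qed
    show "foldr dx (sorted_list_of_set S) (msum ?n ?P signof (\<lambda>\<sigma> r. fst (cs ! \<sigma> r)) (\<lambda>\<sigma> r. snd (cs ! \<sigma> r))) X Y
       = (\<Sum>\<sigma>\<in>?P. G \<sigma> (\<sigma> ` S))" unfolding fe by (rule m)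
  qed
  also have "\<dots> = (\<Sum>\<sigma>\<in>?P. \<Sum>S\<in>?K. G \<sigma> (\<sigma> ` S))" by (rule sum.swap)
  also have "\<dots> = (\<Sum>\<sigma>\<in>?P. \<Sum>T\<in>?K. G \<sigma> T)"
    by (rule sum.cong[OF refl], rule sum.reindex_bij_betw, rule perm_image_bij) simp
  also have "\<dots> = (\<Sum>T\<in>?K. \<Sum>\<sigma>\<in>?P. G \<sigma> T)" by (rule sum.swap)
  also have "\<dots> = (\<Sum>T\<in>?K. epsilon cs (ek_diag T cs) * Delta (ek_diag T cs) X Y)"
  proof (rule sum.cong[OF refl])
    fix T assume T: "T \<in> ?K"
    then have Tsub: "T \<subseteq> {..<?n}" by simp
    have finT: "finite T" using T finite_subset by blast
    show "(\<Sum>\<sigma>\<in>?P. G \<sigma> T) = epsilon cs (ek_diag T cs) * Delta (ek_diag T cs) X Y"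
    proof (cases "\<forall>t\<in>T. 1 \<le> fst (cs!t)")
      case True
      show ?thesis unfolding eps_ek[OF Tsub True] Delta_ek_pos[OF Tsub True] G_def
        by (simp add: sum_distrib_left mult_ac)
    next
      case False
      then obtain t where "t \<in> T" "fst (cs!t) = 0" by auto
      then have "(\<Prod>t\<in>T. real (fst (cs!t))) = 0" using finT by (auto simp: prod_zero_iff)
      then show ?thesis unfolding Delta_ek_zero[OF Tsub False] G_def by simp
    qed
  qed
  finally show "ek_dX ?n k (Delta_L cs) X Y = (\<Sum>T\<in>?K. epsilon cs (ek_diag T cs) * Delta (ek_diag T cs) X Y)" .
next
  fix S assume A: "S \<subseteq> {..<length cs} \<and> card S = k \<and> Delta (ek_diag S cs) \<noteq> (\<lambda>X Y. 0)"
  have all: "\<forall>t\<in>S. 1 \<le> fst (cs!t)"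
  proof (rule ccontr)
    assume "\<not> (\<forall>t\<in>S. 1 \<le> fst (cs!t))"
    then have "Delta (ek_diag S cs) = (\<lambda>X Y. 0)" using Delta_ek_zero[of S cs] A by (intro ext) auto
    then show False using A by simp
  qed
  have finS: "finite S" using A finite_subset by blast
  show "\<exists>m::nat. m > 0 \<and> epsilon cs (ek_diag S cs) = real m"
    using all finS eps_ek[of S cs] A
    by (intro exI[of _ "\<Prod>t\<in>S. fst (cs!t)"]) (auto simp: prod_pos)
qed

end
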